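(* $A_o^*(n)$ is equal to the quotient of $A_o(n)$ by the closed ideal generated by the relations $abc=cba$, one for each choice of $a,b,c\in\{u_{ij}: i,j=1,\dots,n\}$.
   Context: $A_o(n)$ is the universal $C^*$-algebra generated by self-adjoint elements $u_{ij}$ ($1\le i,j\le n$) such that $u=(u_{ij})$ satisfies $uu^t=u^tu=1$. $P(k,l)$ is the set of partitions of a set of $k$ upper points labelled $1,\dots,k$ and $l$ lower points labelled $1,\dots,l$. Two blocks $\{a,b\},\{c,d\}$ of a pairing cross if, listing the points in the cyclic order upper $1,\dots,k$ then lower $l,\dots,1$ (with $a<b$, $c<d$), one has $a<c<b<d$ or $c<a<d<b$. $P_o^*(k,l)$ is the set of pairings in $P(k,l)$ in which each block crosses an even number of other blocks. For $p\in P(k,l)$, $T_p:(\mathbb C^n)^{\otimes k}\to(\mathbb C^n)^{\otimes l}$ is $T_p(e_{i_1}\otimes\dots\otimes e_{i_k})=\sum_j\delta_p(i,j)e_{j_1}\otimes\dots\otimes e_{j_l}$, with $\delta_p(i,j)=1$ if points in the same block carry equal labels (upper point $r$ labelled $i_r$, lower point $s$ labelled $j_s$) and $0$ otherwise. $A_o^*(n)$ is the quotient of $A_o(n)$ by the closed ideal generated by the entries of $(T_p\otimes1)u^{\otimes k}-u^{\otimes l}(T_p\otimes1)$ for all $k,l$ and $p\in P_o^*(k,l)$, where $u^{\otimes k}$ is the $n^k\times n^k$ matrix with entries $u_{i_1j_1}\cdots u_{i_kj_k}$. *)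

theory Defs
  imports "HOL-Analysis.Analysis" "HOL-Library.FuncSet"
begin

text \<open>The real Banach-algebra structure comes from the library; complex scalar
  multiplication and the involution are added here.\<close>

class cstar_algebra = banach + real_normed_algebra_1 +
  fixes scaleC :: "complex \<Rightarrow> 'a \<Rightarrow> 'a"
    and adj :: "'a \<Rightarrow> 'a"
  assumes scaleC_add_right: "scaleC c (x + y) = scaleC c x + scaleC c y"
    and scaleC_add_left: "scaleC (c + d) x = scaleC c x + scaleC d x"
    and scaleC_scaleC: "scaleC c (scaleC d x) = scaleC (c * d) x"
    and scaleC_one: "scaleC 1 x = x"
    and scaleR_scaleC: "scaleR r x = scaleC (complex_of_real r) x"
    and scaleC_mult_left: "scaleC c x * y = scaleC c (x * y)"
    and mult_scaleC_right: "x * scaleC c y = scaleC c (x * y)"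
    and norm_scaleC: "norm (scaleC c x) = cmod c * norm x"
    and adj_adj: "adj (adj x) = x"
    and adj_add: "adj (x + y) = adj x + adj y"
    and adj_mult: "adj (x * y) = adj y * adj x"
    and adj_scaleC: "adj (scaleC c x) = scaleC (cnj c) (adj x)"
    and cstar_identity: "norm (adj x * x) = (norm x)\<^sup>2"

text \<open>Points of P(k,l): upper points Inl r (r < k), lower points Inr s (s < l),
  0-based (upper point r+1 / lower point s+1 of the paper).\<close>

definition pts :: "nat \<Rightarrow> nat \<Rightarrow> (nat + nat) set" where
  "pts k l = Inl ` {..<k} \<union> Inr ` {..<l}"

definition is_pairing :: "nat \<Rightarrow> nat \<Rightarrow> (nat + nat) set set \<Rightarrow> bool" where
  "is_pairing k l p \<longleftrightarrow> \<Union>p = pts k l \<and> (\<forall>B\<in>p. card B = 2)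
     \<and> (\<forall>B\<in>p. \<forall>C\<in>p. B \<noteq> C \<longrightarrow> B \<inter> C = {})"

text \<open>Position in the cyclic order upper 1..k, then lower l..1.\<close>
fun cpos :: "nat \<Rightarrow> nat \<Rightarrow> nat + nat \<Rightarrow> nat" where
  "cpos k l (Inl r) = r"
| "cpos k l (Inr s) = k + (l - 1 - s)"

definition crosses :: "nat \<Rightarrow> nat \<Rightarrow> (nat + nat) set \<Rightarrow> (nat + nat) set \<Rightarrow> bool" where
  "crosses k l B C \<longleftrightarrow> (\<exists>a b c d. B = {a, b} \<and> C = {c, d}
      \<and> cpos k l a < cpos k l b \<and> cpos k l c < cpos k l d
      \<and> ((cpos k l a < cpos k l c \<and> cpos k l c < cpos k l b \<and> cpos k l b < cpos k l d)
         \<or> (cpos k l c < cpos k l a \<and> cpos k l a < cpos k l d \<and> cpos k l d < cpos k l b)))"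

definition Po_star :: "nat \<Rightarrow> nat \<Rightarrow> (nat + nat) set set set" where
  "Po_star k l = {p. is_pairing k l p \<and>
      (\<forall>B\<in>p. even (card {C\<in>p. crosses k l B C}))}"

definition delta :: "(nat + nat) set set \<Rightarrow> (nat \<Rightarrow> nat) \<Rightarrow> (nat \<Rightarrow> nat) \<Rightarrow> bool" where
  "delta p i j \<longleftrightarrow> (\<forall>B\<in>p. \<forall>x\<in>B. \<forall>y\<in>B.
      case_sum i j x = case_sum i j y)"

abbreviation multi_idx :: "nat \<Rightarrow> nat \<Rightarrow> (nat \<Rightarrow> nat) set" where
  "multi_idx k n \<equiv> {..<k} \<rightarrow>\<^sub>E {..<n}"

text \<open>Entry (j, i') of (T_p \<otimes> 1) u^{\<otimes>k} equals entry (j, i') of u^{\<otimes>l} (T_p \<otimes> 1),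
  for all j \<in> [n]^l, i' \<in> [n]^k. Products are ordered (noncommutative).\<close>
definition intertwines ::
  "nat \<Rightarrow> (nat \<Rightarrow> nat \<Rightarrow> 'a::ring_1) \<Rightarrow> nat \<Rightarrow> nat \<Rightarrow> (nat + nat) set set \<Rightarrow> bool" where
  "intertwines n u k l p \<longleftrightarrow>
     (\<forall>j\<in>multi_idx l n. \<forall>i'\<in>multi_idx k n.
        (\<Sum>i\<in>multi_idx k n. if delta p i j then prod_list (map (\<lambda>r. u (i r) (i' r)) [0..<k]) else 0)
      = (\<Sum>j'\<in>multi_idx l n. if delta p i' j' then prod_list (map (\<lambda>s. u (j s) (j' s)) [0..<l]) else 0))"

definition orth_selfadj :: "nat \<Rightarrow> (nat \<Rightarrow> nat \<Rightarrow> 'a::cstar_algebra) \<Rightarrow> bool" where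
  "orth_selfadj n u \<longleftrightarrow>
     (\<forall>i<n. \<forall>j<n. adj (u i j) = u i j)
   \<and> (\<forall>i<n. \<forall>j<n. (\<Sum>m<n. u i m * u j m) = (if i = j then 1 else 0))
   \<and> (\<forall>i<n. \<forall>j<n. (\<Sum>m<n. u m i * u m j) = (if i = j then 1 else 0))"

end

theory Submission
  imports Defs "HOL-Library.Multiset"
begin


fun evs :: "'a list \<Rightarrow> 'a multiset" and ods :: "'a list \<Rightarrow> 'a multiset" where
  "evs [] = {#}"
| "evs (x # xs) = add_mset x (ods xs)"
| "ods [] = {#}"
| "ods (x # xs) = evs xs"

lemma evs_ods_append:
  "evs (as @ bs) = evs as + (if even (length as) then evs bs else ods bs) \<and>
   ods (as @ bs) = ods as + (if even (length as) then ods bs else evs bs)"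
  by (induction as) auto

lemma evs_append_even: "even (length as) \<Longrightarrow> evs (as @ bs) = evs as + evs bs"
  by (simp add: evs_ods_append)
lemma ods_append_even: "even (length as) \<Longrightarrow> ods (as @ bs) = ods as + ods bs"
  by (simp add: evs_ods_append)

fun swp :: "'a list \<Rightarrow> 'a list" where
  "swp (a # b # r) = b # a # swp r"
| "swp xs = xs"

lemma swp_props: "even (length as) \<Longrightarrow> evs (swp as) = ods as \<and> ods (swp as) = evs as
   \<and> length (swp as) = length as \<and> set (swp as) = set as"
  by (induction as rule: swp.induct) auto

lemma move_front:
  fixes x :: "'a::ring_1"
  assumes HC: "\<forall>a\<in>G. \<forall>b\<in>G. \<forall>c\<in>G. a * b * c = c * b * a"
  shows "set as \<subseteq> G \<Longrightarrow> x \<in> G \<Longrightarrow> even (length as) \<Longrightarrow>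
     prod_list (as @ [x]) = x * prod_list (swp as)"
proof (induction as rule: swp.induct)
  case (1 a b r)
  then have "prod_list ((a # b # r) @ [x]) = (a * b * x) * prod_list (swp r)"
    by (simp add: mult.assoc)
  also have "a * b * x = x * b * a" using HC 1 by auto
  finally show ?case by (simp add: mult.assoc)
qed auto

lemma split_ev_od:
  "(x \<in># evs ys \<longrightarrow> (\<exists>as bs. ys = as @ x # bs \<and> even (length as))) \<and>
   (x \<in># ods ys \<longrightarrow> (\<exists>as bs. ys = as @ x # bs \<and> odd (length as)))"
proof (induction ys)
  case Nil
  then show ?case by simp
next
  case (Cons y ys)
  show ?case
  proof (intro conjI impI)
    assume "x \<in># evs (y # ys)"
    then have "x = y \<or> x \<in># ods ys" by simp
    then show "\<exists>as bs. y # ys = as @ x # bs \<and> even (length as)"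
    proof
      assume "x = y" then show ?thesis by (rule_tac x="[]" in exI, rule_tac x=ys in exI) simp
    next
      assume "x \<in># ods ys"
      with Cons obtain as bs where "ys = as @ x # bs" "odd (length as)" by blast
      then show ?thesis by (intro exI[of _ "y # as"] exI[of _ bs]) auto
    qed
  next
    assume "x \<in># ods (y # ys)"
    then have "x \<in># evs ys" by simp
    with Cons obtain as bs where "ys = as @ x # bs" "even (length as)" by blast
    then show "\<exists>as bs. y # ys = as @ x # bs \<and> odd (length as)"
      by (intro exI[of _ "y # as"] exI[of _ bs]) auto
  qed
qed

lemma evs_ods_set: "set_mset (evs xs) \<union> set_mset (ods xs) = set xs"
  by (induction xs rule: swp.induct) auto

lemma word_lemma:
  fixes xs :: "'a::ring_1 list"
  assumes HC: "\<forall>a\<in>G. \<forall>b\<in>G. \<forall>c\<in>G. a * b * c = c * b * a"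
  shows "set xs \<subseteq> G \<Longrightarrow> set ys \<subseteq> G \<Longrightarrow> evs xs = evs ys \<Longrightarrow> ods xs = ods ys \<Longrightarrow>
     prod_list xs = prod_list ys"
proof (induction xs arbitrary: ys)
  case Nil
  then show ?case by (cases ys) auto
next
  case (Cons x xs ys)
  have "x \<in># evs ys" unfolding Cons.prems(3)[symmetric] by simp
  then obtain as bs where ys: "ys = as @ x # bs" and ev: "even (length as)"
    using split_ev_od[of x ys] by (elim conjE) (drule mp, assumption, elim exE conjE, blast)
  have sw: "evs (swp as) = ods as" "ods (swp as) = evs as" "length (swp as) = length as"
    "set (swp as) = set as" using swp_props[OF ev] by auto
  have asG: "set as \<subseteq> G" "set bs \<subseteq> G" "x \<in> G" using Cons.prems ys by auto
  have "prod_list ys = prod_list (as @ [x]) * prod_list bs" by (simp add: ys mult.assoc)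
  also have "\<dots> = x * prod_list (swp as @ bs)"
    using move_front[OF HC asG(1,3) ev] by (simp add: mult.assoc)
  finally have py: "prod_list ys = x * prod_list (swp as @ bs)" .
  have e1: "evs ys = evs as + add_mset x (ods bs)" "ods ys = ods as + evs bs"
    using evs_append_even[OF ev] ods_append_even[OF ev] ys by auto
  have ev2: "even (length (swp as))" using ev sw by simp
  have "prod_list xs = prod_list (swp as @ bs)"
  proof (rule Cons.IH)
    show "set xs \<subseteq> G" using Cons.prems by auto
    show "set (swp as @ bs) \<subseteq> G" using asG sw by auto
    show "evs xs = evs (swp as @ bs)"
      using Cons.prems(4) e1 sw evs_append_even[OF ev2] by simp
    show "ods xs = ods (swp as @ bs)"
      using Cons.prems(3) e1 sw ods_append_even[OF ev2] by simp
  qed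
  then show ?case using py by simp
qed

lemma inj_upd_PiE: "c \<notin> S \<Longrightarrow> inj_on (\<lambda>(y, g). g(c := y)) (T \<times> Pi\<^sub>E S B)"
  unfolding inj_on_def
proof (clarify)
  fix y g y' g'
  assume cS: "c \<notin> S" and "g \<in> Pi\<^sub>E S B" "g' \<in> Pi\<^sub>E S B" and eq: "g(c := y) = g'(c := y')"
  then have "g c = undefined" "g' c = undefined" by auto
  moreover have "y = y'" using fun_cong[OF eq, of c] by simp
  moreover have "\<forall>z. z \<noteq> c \<longrightarrow> g z = g' z" using eq by (metis fun_upd_other)
  ultimately show "y = y' \<and> g = g'" by (metis ext)
qed

lemma cap_contract:
  fixes u :: "nat \<Rightarrow> nat \<Rightarrow> 'a::ring_1"
  assumes orth: "\<forall>a<n. \<forall>b<n. (\<Sum>m<n. u m a * u m b) = (if a = b then 1 else 0)"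
  shows "distinct cs \<Longrightarrow> (\<forall>c\<in>set cs. fa c < n \<and> fb c < n) \<Longrightarrow>
   (\<Sum>x\<in>set cs \<rightarrow>\<^sub>E {..<n}. prod_list (concat (map (\<lambda>c. [u (x c) (fa c), u (x c) (fb c)]) cs)) * w)
   = (if \<forall>c\<in>set cs. fa c = fb c then w else 0)"
proof (induction cs)
  case Nil
  then show ?case by simp
next
  case (Cons c cs)
  let ?F = "\<lambda>x cs. prod_list (concat (map (\<lambda>c. [u (x c) (fa c), u (x c) (fb c)]) cs)) * w"
  have cn: "c \<notin> set cs" using Cons.prems by simp
  have "(\<Sum>x\<in>set (c # cs) \<rightarrow>\<^sub>E {..<n}. ?F x (c # cs))
     = (\<Sum>x\<in>(\<lambda>(y, g). g(c := y)) ` ({..<n} \<times> (set cs \<rightarrow>\<^sub>E {..<n})). ?F x (c # cs))"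
    by (simp add: PiE_insert_eq)
  also have "\<dots> = (\<Sum>(y, g)\<in>{..<n} \<times> (set cs \<rightarrow>\<^sub>E {..<n}). ?F (g(c := y)) (c # cs))"
    by (subst sum.reindex[OF inj_upd_PiE[OF cn]]) (simp add: case_prod_unfold)
  also have "\<dots> = (\<Sum>y<n. \<Sum>g\<in>set cs \<rightarrow>\<^sub>E {..<n}. ?F (g(c := y)) (c # cs))"
    by (simp add: sum.cartesian_product)
  also have "\<dots> = (\<Sum>y<n. u y (fa c) * u y (fb c) * (\<Sum>g\<in>set cs \<rightarrow>\<^sub>E {..<n}. ?F g cs))"
  proof (rule sum.cong[OF refl])
    fix y
    have "?F (g(c := y)) (c # cs) = u y (fa c) * u y (fb c) * ?F g cs" for g
    proof -
      have eq: "map (\<lambda>c'. [u ((g(c := y)) c') (fa c'), u ((g(c := y)) c') (fb c')]) cs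
          = map (\<lambda>c'. [u (g c') (fa c'), u (g c') (fb c')]) cs"
        using cn by (intro map_cong) auto
      have "?F (g(c := y)) (c # cs) = u y (fa c) * u y (fb c) * ?F (g(c := y)) cs"
        by (simp add: mult.assoc)
      also have "\<dots> = u y (fa c) * u y (fb c) * ?F g cs" by (simp only: eq)
      finally show ?thesis .
    qed
    then show "(\<Sum>g\<in>set cs \<rightarrow>\<^sub>E {..<n}. ?F (g(c := y)) (c # cs))
       = u y (fa c) * u y (fb c) * (\<Sum>g\<in>set cs \<rightarrow>\<^sub>E {..<n}. ?F g cs)"
      by (simp add: sum_distrib_left)
  qed
  also have "\<dots> = (\<Sum>y<n. u y (fa c) * u y (fb c)) * (\<Sum>g\<in>set cs \<rightarrow>\<^sub>E {..<n}. ?F g cs)"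
    by (simp add: sum_distrib_right)
  also have "\<dots> = (if fa c = fb c then 1 else 0) * (if \<forall>c\<in>set cs. fa c = fb c then w else 0)"
    using orth Cons by simp
  finally show ?case by simp
qed

fun inter :: "'a list \<Rightarrow> 'a list \<Rightarrow> 'a list" where
  "inter (x # xs) (y # ys) = x # y # inter xs ys"
| "inter [] ys = ys"
| "inter xs [] = xs"

lemma inter_evs: "length xs = length ys \<or> length xs = Suc (length ys) \<Longrightarrow>
   evs (inter xs ys) = mset xs \<and> ods (inter xs ys) = mset ys"
  by (induction xs ys rule: inter.induct) auto

lemma exists_word:
  assumes "size E = size Od \<or> size E = Suc (size Od)"
  shows "\<exists>T. evs T = E \<and> ods T = Od"
proof -
  obtain xs ys where "mset xs = E" "mset ys = Od" by (metis ex_mset)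
  then show ?thesis using inter_evs[of xs ys] assms by (metis size_mset)
qed

lemma size_evs_ods: "size (evs xs) = size (ods xs) \<or> size (evs xs) = Suc (size (ods xs))"
  by (induction xs rule: swp.induct) auto

lemma evs_map_upt: "evs (map f [0..<k]) = image_mset f (mset_set {r. r < k \<and> even r}) \<and>
   ods (map f [0..<k]) = image_mset f (mset_set {r. r < k \<and> odd r})"
proof (induction k)
  case 0
  then show ?case by simp
next
  case (Suc k)
  have A: "{r. r < Suc k \<and> even r} = (if even k then insert k {r. r < k \<and> even r} else {r. r < k \<and> even r})"
    "{r. r < Suc k \<and> odd r} = (if odd k then insert k {r. r < k \<and> odd r} else {r. r < k \<and> odd r})"
    by (auto simp: less_Suc_eq)
  have fin: "finite {r. r < k \<and> even r}" "finite {r. r < k \<and> odd r}" by auto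
  show ?case using Suc evs_ods_append[of "map f [0..<k]" "[f k]"] fin
    by (simp add: A)
qed

lemma evs_concat_pairs: "evs (concat (map (\<lambda>c. [fa c, fb c]) cs)) = mset (map fa cs) \<and>
   ods (concat (map (\<lambda>c. [fa c, fb c]) cs)) = mset (map fb cs)"
  by (induction cs) auto




lemma pts_iff: "Inl r \<in> pts k l \<longleftrightarrow> r < k" "Inr s \<in> pts k l \<longleftrightarrow> s < l"
  by (auto simp: pts_def)

lemma finite_pts: "finite (pts k l)" by (simp add: pts_def)

context
  fixes k l :: nat and p :: "(nat + nat) set set"
  assumes pr: "is_pairing k l p"
begin

lemma pr_union: "\<Union>p = pts k l" using pr by (simp add: is_pairing_def)
lemma pr_card: "B \<in> p \<Longrightarrow> card B = 2" using pr by (simp add: is_pairing_def)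
lemma pr_disj: "B \<in> p \<Longrightarrow> C \<in> p \<Longrightarrow> B \<noteq> C \<Longrightarrow> B \<inter> C = {}"
  using pr by (simp add: is_pairing_def)
lemma pr_uniq: "B \<in> p \<Longrightarrow> C \<in> p \<Longrightarrow> x \<in> B \<Longrightarrow> x \<in> C \<Longrightarrow> B = C"
  by (metis IntI empty_iff pr_disj)
lemma pr_sub: "B \<in> p \<Longrightarrow> B \<subseteq> pts k l" using pr_union by (metis Sup_upper)
lemma pr_fin: "finite p"
proof -
  have "p \<subseteq> Pow (pts k l)" using pr_sub by blast
  then show ?thesis using finite_pts by (meson finite_Pow_iff finite_subset)
qed
lemma pr_two: "B \<in> p \<Longrightarrow> \<exists>a b. a \<noteq> b \<and> B = {a, b}"
proof -
  assume "B \<in> p"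
  then have "card B = 2" by (rule pr_card)
  then obtain a b where "B = {a, b}" "a \<noteq> b" by (meson card_2_iff)
  then show ?thesis by blast
qed
lemma pr_neq: "{x, y} \<in> p \<Longrightarrow> x \<noteq> y"
proof
  assume "{x, y} \<in> p" "x = y"
  then have "card {x} = 2" using pr_card by fastforce
  then show False by simp
qed
lemma pr_mem: "{x, y} \<in> p \<Longrightarrow> x \<in> pts k l \<and> y \<in> pts k l"
  using pr_sub by (metis insert_subset)

definition mate :: "nat + nat \<Rightarrow> nat + nat" where
  "mate x = (THE y. {x, y} \<in> p)"

lemma mate_uniq: "{x, y} \<in> p \<Longrightarrow> mate x = y"
proof -
  assume xy: "{x, y} \<in> p"
  have u: "y' = y" if "{x, y'} \<in> p" for y'
  proof -
    have "{x, y'} = {x, y}" using pr_uniq[OF that xy, of x] by simp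
    moreover have "x \<noteq> y'" using pr_neq[OF that] .
    ultimately show ?thesis by (metis doubleton_eq_iff)
  qed
  show ?thesis unfolding mate_def by (rule the_equality[where P="\<lambda>y. {x, y} \<in> p", OF xy u])
qed

lemma mate_ex: "x \<in> pts k l \<Longrightarrow> {x, mate x} \<in> p"
proof -
  assume "x \<in> pts k l"
  then obtain B where B: "B \<in> p" "x \<in> B" using pr_union by (metis UnionE)
  then obtain a b where ab: "a \<noteq> b" "B = {a, b}" using pr_two by blast
  then have "\<exists>y. {x, y} \<in> p" using B
    by (cases "x = a") (auto simp: insert_commute)
  then show ?thesis using mate_uniq by metis
qed

lemma mate_sym: "{x, y} \<in> p \<Longrightarrow> {y, x} \<in> p" by (simp add: insert_commute)

lemma mate_Inl: "r < k \<Longrightarrow> (\<exists>r'. mate (Inl r) = Inl r' \<and> {Inl r, Inl r'} \<in> p) \<or>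
   (\<exists>s. mate (Inl r) = Inr s \<and> {Inl r, Inr s} \<in> p)"
  using mate_ex[of "Inl r"] by (cases "mate (Inl r)") (auto simp: pts_iff)

lemma mate_Inr: "s < l \<Longrightarrow> (\<exists>r. mate (Inr s) = Inl r \<and> {Inr s, Inl r} \<in> p) \<or>
   (\<exists>t. mate (Inr s) = Inr t \<and> {Inr s, Inr t} \<in> p)"
  using mate_ex[of "Inr s"] by (cases "mate (Inr s)") (auto simp: pts_iff)

lemma bd1: "{Inl r, z} \<in> p \<Longrightarrow> r < k" by (metis pr_mem pts_iff(1))
lemma bd2: "{z, Inl r} \<in> p \<Longrightarrow> r < k" by (metis pr_mem pts_iff(1))
lemma bd3: "{Inr s, z} \<in> p \<Longrightarrow> s < l" by (metis pr_mem pts_iff(2))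
lemma bd4: "{z, Inr s} \<in> p \<Longrightarrow> s < l" by (metis pr_mem pts_iff(2))
lemmas bds = bd1 bd2 bd3 bd4

definition "Cp = {(r, r'). {Inl r, Inl r'} \<in> p \<and> even r}"
definition "ThE = {(r, s). {Inl r, Inr s} \<in> p \<and> even r}"
definition "ThO = {(r, s). {Inl r, Inr s} \<in> p \<and> odd r}"

lemma Cp_sub: "Cp \<subseteq> {..<k} \<times> {..<k}"
  unfolding Cp_def by (auto dest: bds)
lemma ThE_sub: "ThE \<subseteq> {..<k} \<times> {..<l}"
  unfolding ThE_def by (auto dest: bds)
lemma ThO_sub: "ThO \<subseteq> {..<k} \<times> {..<l}"
  unfolding ThO_def by (auto dest: bds)
lemma fin_sets: "finite Cp" "finite ThE" "finite ThO"
  using Cp_sub ThE_sub ThO_sub finite_subset by blast+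

context
  assumes par: "\<forall>r r'. {Inl r, Inl r'} \<in> p \<longrightarrow> (even r \<longleftrightarrow> odd r')"
begin

lemma Ev_decomp: "{r. r < k \<and> even r} = fst ` Cp \<union> fst ` ThE"
  "fst ` Cp \<inter> fst ` ThE = {}" "inj_on fst Cp" "inj_on fst ThE"
proof -
  show "{r. r < k \<and> even r} = fst ` Cp \<union> fst ` ThE"
  proof (intro equalityI subsetI)
    fix r assume "r \<in> {r. r < k \<and> even r}"
    then have r: "r < k" "even r" by auto
    from mate_Inl[OF r(1)] show "r \<in> fst ` Cp \<union> fst ` ThE"
      using r unfolding Cp_def ThE_def by (auto intro: rev_image_eqI)
  next
    fix r assume "r \<in> fst ` Cp \<union> fst ` ThE"
    then show "r \<in> {r. r < k \<and> even r}" using Cp_sub ThE_sub unfolding Cp_def ThE_def by auto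
  qed
  show "fst ` Cp \<inter> fst ` ThE = {}"
  proof (rule ccontr)
    assume "fst ` Cp \<inter> fst ` ThE \<noteq> {}"
    then obtain r0 r s where a: "{Inl r, Inl r0} \<in> p" and b: "{Inl r, Inr s} \<in> p"
      unfolding Cp_def ThE_def by auto
    show False using mate_uniq[OF a] mate_uniq[OF b] by simp
  qed
  show "inj_on fst Cp"
  proof (rule inj_onI)
    fix x y assume xy: "x \<in> Cp" "y \<in> Cp" "fst x = fst y"
    obtain a1 b1 a2 b2 where x: "x = (a1, b1)" and y: "y = (a2, b2)" by (cases x, cases y)
    have h1: "{Inl a1, Inl b1} \<in> p" and h2: "{Inl a2, Inl b2} \<in> p" and e: "fst x = fst y" using xy x y unfolding Cp_def by auto
    show "x = y" using mate_uniq[OF h1] mate_uniq[OF h2] e x y by auto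
  qed
  show "inj_on fst ThE"
  proof (rule inj_onI)
    fix x y assume xy: "x \<in> ThE" "y \<in> ThE" "fst x = fst y"
    obtain a1 b1 a2 b2 where x: "x = (a1, b1)" and y: "y = (a2, b2)" by (cases x, cases y)
    have h1: "{Inl a1, Inr b1} \<in> p" and h2: "{Inl a2, Inr b2} \<in> p" and e: "fst x = fst y" using xy x y unfolding ThE_def by auto
    show "x = y" using mate_uniq[OF h1] mate_uniq[OF h2] e x y by auto
  qed
qed

lemma Od_decomp: "{r. r < k \<and> odd r} = snd ` Cp \<union> fst ` ThO"
  "snd ` Cp \<inter> fst ` ThO = {}" "inj_on snd Cp" "inj_on fst ThO"
proof -
  show "{r. r < k \<and> odd r} = snd ` Cp \<union> fst ` ThO"
  proof (intro equalityI subsetI)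
    fix r assume "r \<in> {r. r < k \<and> odd r}"
    then have r: "r < k" "odd r" by auto
    from mate_Inl[OF r(1)] show "r \<in> snd ` Cp \<union> fst ` ThO"
    proof
      assume "\<exists>r'. mate (Inl r) = Inl r' \<and> {Inl r, Inl r'} \<in> p"
      then obtain r' where "{Inl r, Inl r'} \<in> p" by blast
      then have "{Inl r', Inl r} \<in> p" "even r'" using par r by (auto simp: insert_commute)
      then show ?thesis unfolding Cp_def by (auto intro: rev_image_eqI)
    next
      assume "\<exists>s. mate (Inl r) = Inr s \<and> {Inl r, Inr s} \<in> p"
      then show ?thesis using r unfolding ThO_def by (auto intro: rev_image_eqI)
    qed
  next
    fix r assume a: "r \<in> snd ` Cp \<union> fst ` ThO"
    then show "r \<in> {r. r < k \<and> odd r}"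
    proof
      assume "r \<in> snd ` Cp"
      then obtain r0 where "{Inl r0, Inl r} \<in> p" "even r0" unfolding Cp_def by auto
      then show ?thesis using par bds by auto
    next
      assume "r \<in> fst ` ThO" then show ?thesis using ThO_sub unfolding ThO_def by auto
    qed
  qed
  show "snd ` Cp \<inter> fst ` ThO = {}"
  proof (rule ccontr)
    assume "snd ` Cp \<inter> fst ` ThO \<noteq> {}"
    then obtain r0 r s where a: "{Inl r0, Inl r} \<in> p" and b: "{Inl r, Inr s} \<in> p"
      unfolding Cp_def ThO_def by auto
    show False using mate_uniq[OF mate_sym[OF a]] mate_uniq[OF b] by simp
  qed
  show "inj_on snd Cp"
  proof (rule inj_onI)
    fix x y assume xy: "x \<in> Cp" "y \<in> Cp" "snd x = snd y"
    obtain a1 b1 a2 b2 where x: "x = (a1, b1)" and y: "y = (a2, b2)" by (cases x, cases y)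
    have h1: "{Inl a1, Inl b1} \<in> p" and h2: "{Inl a2, Inl b2} \<in> p" and e: "snd x = snd y" using xy x y unfolding Cp_def by auto
    show "x = y" using mate_uniq[OF mate_sym[OF h1]] mate_uniq[OF mate_sym[OF h2]] e x y by auto
  qed
  show "inj_on fst ThO"
  proof (rule inj_onI)
    fix x y assume xy: "x \<in> ThO" "y \<in> ThO" "fst x = fst y"
    obtain a1 b1 a2 b2 where x: "x = (a1, b1)" and y: "y = (a2, b2)" by (cases x, cases y)
    have h1: "{Inl a1, Inr b1} \<in> p" and h2: "{Inl a2, Inr b2} \<in> p" and e: "fst x = fst y" using xy x y unfolding ThO_def by auto
    show "x = y" using mate_uniq[OF h1] mate_uniq[OF h2] e x y by auto
  qed
qed

lemma DEC:
  fixes u :: "nat \<Rightarrow> nat \<Rightarrow> 'a" and i i' j :: "nat \<Rightarrow> nat"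
  assumes thr: "\<forall>r s. {Inl r, Inr s} \<in> p \<longrightarrow> i r = j s"
  shows "evs (map (\<lambda>r. u (i r) (i' r)) [0..<k]) =
      image_mset (\<lambda>c. u (i (fst c)) (i' (fst c))) (mset_set Cp)
    + image_mset (\<lambda>(r, s). u (j s) (i' r)) (mset_set ThE)"
  and "ods (map (\<lambda>r. u (i r) (i' r)) [0..<k]) =
      image_mset (\<lambda>c. u (i (snd c)) (i' (snd c))) (mset_set Cp)
    + image_mset (\<lambda>(r, s). u (j s) (i' r)) (mset_set ThO)"
proof -
  let ?f = "\<lambda>r. u (i r) (i' r)"
  have fin: "finite (fst ` Cp)" "finite (fst ` ThE)" "finite (snd ` Cp)" "finite (fst ` ThO)"
    using fin_sets by auto
  have "evs (map ?f [0..<k]) = image_mset ?f (mset_set (fst ` Cp \<union> fst ` ThE))"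
    using evs_map_upt Ev_decomp(1) by metis
  also have "\<dots> = image_mset ?f (mset_set (fst ` Cp)) + image_mset ?f (mset_set (fst ` ThE))"
    by (simp add: mset_set_Union fin Ev_decomp(2))
  also have "\<dots> = image_mset ?f (image_mset fst (mset_set Cp)) + image_mset ?f (image_mset fst (mset_set ThE))"
    by (simp add: image_mset_mset_set Ev_decomp(3,4))
  also have "\<dots> = image_mset (\<lambda>c. u (i (fst c)) (i' (fst c))) (mset_set Cp)
    + image_mset (\<lambda>(r, s). u (j s) (i' r)) (mset_set ThE)"
    unfolding multiset.map_comp
    by (intro arg_cong2[where f="(+)"] image_mset_cong) (use thr fin_sets in \<open>auto simp: ThE_def\<close>)
  finally show "evs (map ?f [0..<k]) = image_mset (\<lambda>c. u (i (fst c)) (i' (fst c))) (mset_set Cp)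
    + image_mset (\<lambda>(r, s). u (j s) (i' r)) (mset_set ThE)" .
  have "ods (map ?f [0..<k]) = image_mset ?f (mset_set (snd ` Cp \<union> fst ` ThO))"
    using evs_map_upt Od_decomp(1) by metis
  also have "\<dots> = image_mset ?f (mset_set (snd ` Cp)) + image_mset ?f (mset_set (fst ` ThO))"
    by (simp add: mset_set_Union fin Od_decomp(2))
  also have "\<dots> = image_mset ?f (image_mset snd (mset_set Cp)) + image_mset ?f (image_mset fst (mset_set ThO))"
    by (simp add: image_mset_mset_set Od_decomp(3,4))
  also have "\<dots> = image_mset (\<lambda>c. u (i (snd c)) (i' (snd c))) (mset_set Cp)
    + image_mset (\<lambda>(r, s). u (j s) (i' r)) (mset_set ThO)"
    unfolding multiset.map_comp
    by (intro arg_cong2[where f="(+)"] image_mset_cong) (use thr fin_sets in \<open>auto simp: ThO_def\<close>)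
  finally show "ods (map ?f [0..<k]) = image_mset (\<lambda>c. u (i (snd c)) (i' (snd c))) (mset_set Cp)
    + image_mset (\<lambda>(r, s). u (j s) (i' r)) (mset_set ThO)" .
qed

lemma delta_pair: "delta p i j \<Longrightarrow> {a, b} \<in> p \<Longrightarrow> case_sum i j a = case_sum i j b"
  unfolding delta_def by blast

lemma delta_intro: "(\<And>a b. {a, b} \<in> p \<Longrightarrow> case_sum i j a = case_sum i j b) \<Longrightarrow> delta p i j"
  unfolding delta_def
proof (intro ballI)
  fix B x y assume h: "\<And>a b. {a, b} \<in> p \<Longrightarrow> case_sum i j a = case_sum i j b"
    and B: "B \<in> p" "x \<in> B" "y \<in> B"
  obtain a b where "a \<noteq> b" "B = {a, b}" using pr_two[OF B(1)] by blast
  then show "case_sum i j x = case_sum i j y" using B h[of a b] by auto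
qed

lemma len_concat_pairs: "length (concat (map (\<lambda>c. [fa c, fb c]) cs)) = 2 * length cs"
  by (induction cs) auto

lemma SL:
  fixes u :: "nat \<Rightarrow> nat \<Rightarrow> 'a::ring_1" and n :: nat and G :: "'a set"
  assumes HC: "\<forall>a\<in>G. \<forall>b\<in>G. \<forall>c\<in>G. a * b * c = c * b * a"
    and G: "G = {u i j |i j. i < n \<and> j < n}"
    and orth: "\<forall>a<n. \<forall>b<n. (\<Sum>m<n. u m a * u m b) = (if a = b then 1 else 0)"
    and j: "j \<in> multi_idx l n" and i': "i' \<in> multi_idx k n"
  shows "\<exists>T. set T \<subseteq> G \<and> evs T = image_mset (\<lambda>(r, s). u (j s) (i' r)) (mset_set ThE)
    \<and> ods T = image_mset (\<lambda>(r, s). u (j s) (i' r)) (mset_set ThO) \<and>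
    (\<Sum>i\<in>multi_idx k n. if delta p i j then prod_list (map (\<lambda>r. u (i r) (i' r)) [0..<k]) else 0)
    = (if (\<forall>s t. {Inr s, Inr t} \<in> p \<longrightarrow> j s = j t) \<and> (\<forall>r r'. {Inl r, Inl r'} \<in> p \<longrightarrow> i' r = i' r')
       then prod_list T else 0)"
proof -
  define ET where "ET = image_mset (\<lambda>(r, s). u (j s) (i' r)) (mset_set ThE)"
  define OT where "OT = image_mset (\<lambda>(r, s). u (j s) (i' r)) (mset_set ThO)"
  define \<phi> where "\<phi> x = (\<lambda>r. if r < k then (case mate (Inl r) of Inl r' \<Rightarrow> if even r then x (r, r') else x (r', r)
     | Inr s \<Rightarrow> j s) else undefined)" for x :: "nat \<times> nat \<Rightarrow> nat"
  define word where "word i = map (\<lambda>r. u (i r) (i' r)) [0..<k]" for i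
  have thr: "\<forall>r s. {Inl r, Inr s} \<in> p \<longrightarrow> \<phi> x r = j s" for x
    using mate_uniq bds unfolding \<phi>_def by auto
  have \<phi>fst: "\<phi> x (fst c) = x c" if "c \<in> Cp" for x c
    using that mate_uniq bds unfolding \<phi>_def Cp_def by auto
  have \<phi>snd: "\<phi> x (snd c) = x c" if cC: "c \<in> Cp" for x c
  proof -
    obtain r r' where c: "c = (r, r')" "{Inl r, Inl r'} \<in> p" "even r" using cC unfolding Cp_def by (cases c) auto
    have "mate (Inl r') = Inl r" using mate_uniq[OF mate_sym[OF c(2)]] .
    moreover have "r' < k" "\<not> even r'" using c bds par by auto
    ultimately show ?thesis unfolding \<phi>_def c by simp
  qed
  have decx: "evs (word (\<phi> x)) = image_mset (\<lambda>c. u (x c) (i' (fst c))) (mset_set Cp) + ET"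
    "ods (word (\<phi> x)) = image_mset (\<lambda>c. u (x c) (i' (snd c))) (mset_set Cp) + OT" for x
  proof -
    have "image_mset (\<lambda>c. u (\<phi> x (fst c)) (i' (fst c))) (mset_set Cp)
        = image_mset (\<lambda>c. u (x c) (i' (fst c))) (mset_set Cp)"
      "image_mset (\<lambda>c. u (\<phi> x (snd c)) (i' (snd c))) (mset_set Cp)
        = image_mset (\<lambda>c. u (x c) (i' (snd c))) (mset_set Cp)"
      by (rule image_mset_cong, simp add: fin_sets \<phi>fst \<phi>snd)+
    then show "evs (word (\<phi> x)) = image_mset (\<lambda>c. u (x c) (i' (fst c))) (mset_set Cp) + ET"
      "ods (word (\<phi> x)) = image_mset (\<lambda>c. u (x c) (i' (snd c))) (mset_set Cp) + OT"
      using DEC[OF thr[of x], where u=u and i'=i'] unfolding word_def ET_def OT_def by simp_all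
  qed
  have "size ET = size OT \<or> size ET = Suc (size OT)"
    using size_evs_ods[of "word (\<phi> (\<lambda>_. 0))"] decx[of "\<lambda>_. 0"] by simp
  then obtain T where T: "evs T = ET" "ods T = OT" using exists_word by blast
  have TG: "set T \<subseteq> G"
  proof -
    have gen: "a < n \<Longrightarrow> b < n \<Longrightarrow> u a b \<in> G" for a b unfolding G by blast
    have jn: "s < l \<Longrightarrow> j s < n" for s using j by (auto simp: PiE_iff)
    have in': "r < k \<Longrightarrow> i' r < n" for r using i' by (auto simp: PiE_iff)
    have "set_mset ET \<subseteq> G" "set_mset OT \<subseteq> G"
      unfolding ET_def OT_def using fin_sets ThE_sub ThO_sub
      by (auto intro!: gen jn in')
    then show ?thesis using evs_ods_set[of T] T by auto
  qed
  have S: "(\<Sum>i\<in>multi_idx k n. if delta p i j then prod_list (word i) else 0)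
    = (if (\<forall>s t. {Inr s, Inr t} \<in> p \<longrightarrow> j s = j t) \<and> (\<forall>r r'. {Inl r, Inl r'} \<in> p \<longrightarrow> i' r = i' r')
       then prod_list T else 0)"
  proof (cases "\<forall>s t. {Inr s, Inr t} \<in> p \<longrightarrow> j s = j t")
    case False
    then have "\<not> delta p i j" for i using delta_pair[of i j "Inr _" "Inr _"] by auto
    then show ?thesis using False by (simp, blast)
  next
    case Lc: True
    obtain cs where cs: "distinct cs" "set cs = Cp" using finite_distinct_list[OF fin_sets(1)] by blast
    define \<psi> where "\<psi> i = restrict (\<lambda>c. i (fst c)) Cp" for i :: "nat \<Rightarrow> nat"
    define caps where "caps x = concat (map (\<lambda>c. [u (x c) (i' (fst c)), u (x c) (i' (snd c))]) cs)" for x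
    have \<phi>rng: "\<phi> x \<in> multi_idx k n" if x: "x \<in> Cp \<rightarrow>\<^sub>E {..<n}" for x
    proof (rule PiE_I)
      fix r assume r: "r \<in> {..<k}"
      show "\<phi> x r \<in> {..<n}"
      proof (cases "mate (Inl r)")
        case (Inl r')
        then have m: "{Inl r, Inl r'} \<in> p" using mate_ex[of "Inl r"] r by (simp add: pts_iff)
        show ?thesis
        proof (cases "even r")
          case True
          then have "(r, r') \<in> Cp" using m by (simp add: Cp_def)
          then show ?thesis using x r Inl True unfolding \<phi>_def by auto
        next
          case False
          then have "(r', r) \<in> Cp" using m par by (simp add: Cp_def insert_commute)
          then show ?thesis using x r Inl False unfolding \<phi>_def by auto
        qed
      next
        case (Inr s)
        then have "{Inl r, Inr s} \<in> p" using mate_ex[of "Inl r"] r by (simp add: pts_iff)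
        then have "s < l" using bds by blast
        then show ?thesis using j r Inr unfolding \<phi>_def by auto
      qed
    next
      fix r assume "r \<notin> {..<k}" then show "\<phi> x r = undefined" unfolding \<phi>_def by simp
    qed
    have \<phi>delta: "delta p (\<phi> x) j" for x
    proof (rule delta_intro)
      fix a b assume ab: "{a, b} \<in> p"
      show "case_sum (\<phi> x) j a = case_sum (\<phi> x) j b"
      proof (cases a; cases b)
        fix r r' assume a: "a = Inl r" and b: "b = Inl r'"
        have m1: "mate (Inl r) = Inl r'" "mate (Inl r') = Inl r"
          using ab a b mate_uniq mate_sym by blast+
        have "r < k" "r' < k" using ab a b bds by blast+
        moreover have "even r \<longleftrightarrow> odd r'" using par ab a b by blast
        ultimately show ?thesis using a b m1 unfolding \<phi>_def by auto
      next
        fix r s assume a: "a = Inl r" and b: "b = Inr s"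
        then show ?thesis using thr ab by auto
      next
        fix s r assume a: "a = Inr s" and b: "b = Inl r"
        then show ?thesis using thr mate_sym[OF ab] by auto
      next
        fix s t assume a: "a = Inr s" and b: "b = Inr t"
        then show ?thesis using Lc ab by auto
      qed
    qed
    have "(\<Sum>i\<in>multi_idx k n. if delta p i j then prod_list (word i) else 0)
        = (\<Sum>i\<in>{i \<in> multi_idx k n. delta p i j}. prod_list (word i))"
      by (rule sum.inter_filter[symmetric]) (simp add: finite_PiE)
    also have "\<dots> = (\<Sum>x\<in>Cp \<rightarrow>\<^sub>E {..<n}. prod_list (word (\<phi> x)))"
    proof (rule sum.reindex_bij_witness[symmetric, where i=\<psi> and j=\<phi>])
      fix x assume x: "x \<in> Cp \<rightarrow>\<^sub>E {..<n}"
      show "\<psi> (\<phi> x) = x"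
      proof
        fix c show "\<psi> (\<phi> x) c = x c"
          using x \<phi>fst unfolding \<psi>_def by (cases "c \<in> Cp") auto
      qed
      show "\<phi> x \<in> {i \<in> multi_idx k n. delta p i j}" using \<phi>rng[OF x] \<phi>delta by simp
    next
      fix i assume i: "i \<in> {i \<in> multi_idx k n. delta p i j}"
      then have iP: "i \<in> multi_idx k n" and dl: "delta p i j" by auto
      show "\<phi> (\<psi> i) = i"
      proof
        fix r show "\<phi> (\<psi> i) r = i r"
        proof (cases "r < k")
          case False then show ?thesis using iP unfolding \<phi>_def by (auto simp: PiE_iff extensional_def)
        next
          case r: True
          show ?thesis
          proof (cases "mate (Inl r)")
            case (Inl r')
            then have m: "{Inl r, Inl r'} \<in> p" using mate_ex[of "Inl r"] r by (simp add: pts_iff)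
            have eq: "i r = i r'" using delta_pair[OF dl m] by simp
            show ?thesis
            proof (cases "even r")
              case True
              then have "(r, r') \<in> Cp" using m by (simp add: Cp_def)
              then show ?thesis using r Inl True unfolding \<phi>_def \<psi>_def by auto
            next
              case False
              then have "(r', r) \<in> Cp" using m par by (simp add: Cp_def insert_commute)
              then show ?thesis using r Inl False eq unfolding \<phi>_def \<psi>_def by auto
            qed
          next
            case (Inr s)
            then have "{Inl r, Inr s} \<in> p" using mate_ex[of "Inl r"] r by (simp add: pts_iff)
            then have "i r = j s" using delta_pair[OF dl] by fastforce
            then show ?thesis using r Inr unfolding \<phi>_def by auto
          qed
        qed
      qed
      show "\<psi> i \<in> Cp \<rightarrow>\<^sub>E {..<n}"
        unfolding \<psi>_def using iP Cp_sub by (auto simp: PiE_iff)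
    qed simp
    also have "\<dots> = (\<Sum>x\<in>Cp \<rightarrow>\<^sub>E {..<n}. prod_list (caps x) * prod_list T)"
    proof (rule sum.cong[OF refl])
      fix x assume x: "x \<in> Cp \<rightarrow>\<^sub>E {..<n}"
      have ev: "even (length (caps x))" unfolding caps_def len_concat_pairs by simp
      have ce: "evs (caps x) = image_mset (\<lambda>c. u (x c) (i' (fst c))) (mset_set Cp)"
        "ods (caps x) = image_mset (\<lambda>c. u (x c) (i' (snd c))) (mset_set Cp)"
        using evs_concat_pairs[of "\<lambda>c. u (x c) (i' (fst c))" "\<lambda>c. u (x c) (i' (snd c))" cs]
        unfolding caps_def by (simp_all add: cs mset_set_set[symmetric])
      have capsG: "set (caps x) \<subseteq> G"
        using x i' Cp_sub unfolding caps_def G cs(2)[symmetric] by (fastforce simp: PiE_iff)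
      have wG: "set (word (\<phi> x)) \<subseteq> G"
        using \<phi>rng[OF x] i' unfolding word_def G by (fastforce simp: PiE_iff)
      have "prod_list (word (\<phi> x)) = prod_list (caps x @ T)"
        by (rule word_lemma[OF HC wG]) (use capsG TG ev in \<open>simp_all add: decx ce T evs_append_even ods_append_even\<close>)
      then show "prod_list (word (\<phi> x)) = prod_list (caps x) * prod_list T" by simp
    qed
    also have "\<dots> = (if \<forall>c\<in>Cp. i' (fst c) = i' (snd c) then prod_list T else 0)"
      using cap_contract[OF orth cs(1), of "\<lambda>c. i' (fst c)" "\<lambda>c. i' (snd c)" "prod_list T"]
        i' Cp_sub unfolding caps_def cs(2) by (force simp: PiE_iff)
    also have "(\<forall>c\<in>Cp. i' (fst c) = i' (snd c)) \<longleftrightarrow> (\<forall>r r'. {Inl r, Inl r'} \<in> p \<longrightarrow> i' r = i' r')"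
    proof
      assume h: "\<forall>c\<in>Cp. i' (fst c) = i' (snd c)"
      show "\<forall>r r'. {Inl r, Inl r'} \<in> p \<longrightarrow> i' r = i' r'"
      proof (intro allI impI)
        fix r r' assume m: "{Inl r, Inl r'} \<in> p"
        show "i' r = i' r'"
        proof (cases "even r")
          case True then have "(r, r') \<in> Cp" using m by (simp add: Cp_def)
          then show ?thesis using h by force
        next
          case False then have "(r', r) \<in> Cp" using m par by (simp add: Cp_def insert_commute)
          then show ?thesis using h by force
        qed
      qed
    qed (auto simp: Cp_def)
    finally show ?thesis using Lc by simp
  qed
  show ?thesis using S TG T unfolding ET_def OT_def word_def by blast
qed

end
end



lemma cpos_bnd: "z \<in> pts k l \<Longrightarrow> cpos k l z < k + l"
  by (auto simp: pts_def)

lemma cpos_inj: "inj_on (cpos k l) (pts k l)"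
  by (auto simp: pts_def inj_on_def)

lemma cpos_surj: "cpos k l ` pts k l = {..<k + l}"
proof (intro equalityI subsetI)
  fix m assume "m \<in> cpos k l ` pts k l" then show "m \<in> {..<k+l}" using cpos_bnd by auto
next
  fix m assume m: "m \<in> {..<k + l}"
  show "m \<in> cpos k l ` pts k l"
  proof (cases "m < k")
    case True then show ?thesis by (intro image_eqI[of _ _ "Inl m"]) (auto simp: pts_def)
  next
    case False then show ?thesis using m
      by (intro image_eqI[of _ _ "Inr (k + l - 1 - m)"]) (auto simp: pts_def)
  qed
qed

lemma card_between:
  assumes "a \<in> pts k l" "b \<in> pts k l" "cpos k l a < cpos k l b"
  shows "card {z \<in> pts k l. cpos k l a < cpos k l z \<and> cpos k l z < cpos k l b}
     = cpos k l b - cpos k l a - 1"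
proof -
  let ?M = "{z \<in> pts k l. cpos k l a < cpos k l z \<and> cpos k l z < cpos k l b}"
  have img: "cpos k l ` ?M = {cpos k l a<..<cpos k l b}"
  proof (intro equalityI subsetI)
    fix m assume "m \<in> cpos k l ` ?M" then show "m \<in> {cpos k l a<..<cpos k l b}" by auto
  next
    fix m assume m: "m \<in> {cpos k l a<..<cpos k l b}"
    then have "m \<in> {..<k+l}" using cpos_bnd[OF assms(2)] by auto
    then obtain z where z: "z \<in> pts k l" "m = cpos k l z" using cpos_surj by (metis imageE)
    then have "z \<in> ?M" using m by simp
    then show "m \<in> cpos k l ` ?M" using z(2) by (rule rev_image_eqI)
  qed
  have inj: "inj_on (cpos k l) ?M" using cpos_inj by (rule inj_on_subset) (rule subsetI, simp)
  have "card ?M = card (cpos k l ` ?M)" using card_image[OF inj] by simp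
  then show ?thesis using img by simp
qed

lemma even_sum_card: "finite A \<Longrightarrow> even (\<Sum>x\<in>A. f x :: nat) \<longleftrightarrow> even (card {x \<in> A. odd (f x)})"
proof (induction A rule: finite_induct)
  case empty then show ?case by simp
next
  case (insert x A)
  have "{y \<in> insert x A. odd (f y)} = (if odd (f x) then insert x {y \<in> A. odd (f y)} else {y \<in> A. odd (f y)})"
    by auto
  then show ?case using insert by (cases "odd (f x)") auto
qed

lemma crosses_iff:
  assumes pa: "a \<in> pts k l" "b \<in> pts k l" "c \<in> pts k l" "d \<in> pts k l"
    and ab: "cpos k l a < cpos k l b" and cd: "c \<noteq> d" and dj: "{c, d} \<inter> {a, b} = {}"
  shows "crosses k l {a, b} {c, d} \<longleftrightarrow>
    ((cpos k l a < cpos k l c \<and> cpos k l c < cpos k l b) \<noteq> (cpos k l a < cpos k l d \<and> cpos k l d < cpos k l b))"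
proof -
  let ?c = "cpos k l"
  have dd: "c \<noteq> a" "c \<noteq> b" "d \<noteq> a" "d \<noteq> b" using dj by auto
  have ne: "?c x \<noteq> ?c y" if "x \<in> pts k l" "y \<in> pts k l" "x \<noteq> y" for x y
    using inj_onD[OF cpos_inj] that by metis
  have n1: "?c c \<noteq> ?c d" "?c c \<noteq> ?c a" "?c c \<noteq> ?c b" "?c d \<noteq> ?c a" "?c d \<noteq> ?c b"
    using ne[OF pa(3) pa(4) cd] ne[OF pa(3) pa(1) dd(1)] ne[OF pa(3) pa(2) dd(2)]
      ne[OF pa(4) pa(1) dd(3)] ne[OF pa(4) pa(2) dd(4)] by auto
  show ?thesis
  proof
    assume "crosses k l {a, b} {c, d}"
    then obtain a' b' c' d' where h: "{a, b} = {a', b'}" "{c, d} = {c', d'}"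
      "?c a' < ?c b'" "?c c' < ?c d'"
      "(?c a' < ?c c' \<and> ?c c' < ?c b' \<and> ?c b' < ?c d') \<or> (?c c' < ?c a' \<and> ?c a' < ?c d' \<and> ?c d' < ?c b')"
      unfolding crosses_def by blast
    have "a' = a \<and> b' = b" using h(1,3) ab unfolding doubleton_eq_iff by auto
    moreover have "(c' = c \<and> d' = d) \<or> (c' = d \<and> d' = c)" using h(2) unfolding doubleton_eq_iff by auto
    ultimately show "(?c a < ?c c \<and> ?c c < ?c b) \<noteq> (?c a < ?c d \<and> ?c d < ?c b)"
      using h(3-5) by auto
  next
    assume x: "(?c a < ?c c \<and> ?c c < ?c b) \<noteq> (?c a < ?c d \<and> ?c d < ?c b)"
    show "crosses k l {a, b} {c, d}"
    proof (cases "?c c < ?c d")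
      case True
      then have "(?c a < ?c c \<and> ?c c < ?c b \<and> ?c b < ?c d) \<or> (?c c < ?c a \<and> ?c a < ?c d \<and> ?c d < ?c b)"
        using x n1 ab by auto
      then show ?thesis unfolding crosses_def
        by (rule_tac x=a in exI, rule_tac x=b in exI, rule_tac x=c in exI, rule_tac x=d in exI)
          (use ab True in simp)
    next
      case False
      then have F: "?c d < ?c c" using n1 by auto
      then have "(?c a < ?c d \<and> ?c d < ?c b \<and> ?c b < ?c c) \<or> (?c d < ?c a \<and> ?c a < ?c c \<and> ?c c < ?c b)"
        using x n1 ab by auto
      moreover have "{c, d} = {d, c}" by auto
      ultimately show ?thesis unfolding crosses_def
        by (rule_tac x=a in exI, rule_tac x=b in exI, rule_tac x=d in exI, rule_tac x=c in exI)
          (use ab F in simp)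
    qed
  qed
qed




lemma card_Int_pair: "c \<noteq> d \<Longrightarrow> odd (card ({c, d} \<inter> M)) \<longleftrightarrow> ((c \<in> M) \<noteq> (d \<in> M))"
  by (cases "c \<in> M"; cases "d \<in> M") auto

lemma not_cross_self: "cpos k l a < cpos k l b \<Longrightarrow> \<not> crosses k l {a, b} {a, b}"
proof
  assume ab: "cpos k l a < cpos k l b" and "crosses k l {a, b} {a, b}"
  then obtain a' b' c' d' where h: "{a, b} = {a', b'}" "{a, b} = {c', d'}"
      "cpos k l a' < cpos k l b'" "cpos k l c' < cpos k l d'"
      "(cpos k l a' < cpos k l c' \<and> cpos k l c' < cpos k l b' \<and> cpos k l b' < cpos k l d')
       \<or> (cpos k l c' < cpos k l a' \<and> cpos k l a' < cpos k l d' \<and> cpos k l d' < cpos k l b')"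
    unfolding crosses_def by blast
  have "a' = a \<and> b' = b" using h(1,3) ab unfolding doubleton_eq_iff by auto
  moreover have "c' = a \<and> d' = b" using h(2,4) ab unfolding doubleton_eq_iff by auto
  ultimately show False using h(5) by auto
qed

context
  fixes k l p assumes pr: "is_pairing k l p"
begin

lemma parity_block:
  assumes B: "{a, b} \<in> p" and ab: "cpos k l a < cpos k l b"
  shows "even (card {C \<in> p. crosses k l {a, b} C}) \<longleftrightarrow> even (cpos k l b - cpos k l a - 1)"
proof -
  define M where "M = {z \<in> pts k l. cpos k l a < cpos k l z \<and> cpos k l z < cpos k l b}"
  have pa: "a \<in> pts k l" "b \<in> pts k l" using pr_mem[OF pr B] by auto
  have cM: "card M = cpos k l b - cpos k l a - 1" unfolding M_def by (rule card_between[OF pa ab])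
  have MU: "M = (\<Union>C\<in>p. C \<inter> M)" using pr_union[OF pr] unfolding M_def by blast
  have fp: "finite p" by (rule pr_fin[OF pr])
  have "card M = (\<Sum>C\<in>p. card (C \<inter> M))"
  proof -
    have "card (\<Union>C\<in>p. C \<inter> M) = (\<Sum>C\<in>p. card (C \<inter> M))"
    proof (rule card_UN_disjoint[OF fp])
      show "\<forall>C\<in>p. finite (C \<inter> M)" unfolding M_def using finite_pts by auto
      show "\<forall>C\<in>p. \<forall>D\<in>p. C \<noteq> D \<longrightarrow> C \<inter> M \<inter> (D \<inter> M) = {}"
        using pr_disj[OF pr] by blast
    qed
    then show ?thesis using MU by simp
  qed
  then have "even (card M) \<longleftrightarrow> even (card {C \<in> p. odd (card (C \<inter> M))})"
    using even_sum_card[OF fp] by simp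
  moreover have "{C \<in> p. odd (card (C \<inter> M))} = {C \<in> p. crosses k l {a, b} C}"
  proof (rule Collect_cong, rule conj_cong[OF refl])
    fix C assume C: "C \<in> p"
    obtain c d where cd: "c \<noteq> d" "C = {c, d}" using pr_two[OF pr C] by blast
    have pc: "c \<in> pts k l" "d \<in> pts k l" using pr_mem[OF pr] C cd by blast+
    show "odd (card (C \<inter> M)) \<longleftrightarrow> crosses k l {a, b} C"
    proof (cases "C = {a, b}")
      case True
      have "C \<inter> M = {}" unfolding True M_def using ab by auto
      then show ?thesis using not_cross_self[OF ab] True by simp
    next
      case False
      then have dj: "{c, d} \<inter> {a, b} = {}" using pr_disj[OF pr C B] cd by simp
      show ?thesis unfolding cd(2) card_Int_pair[OF cd(1)] crosses_iff[OF pa pc ab cd(1) dj]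
        using pc unfolding M_def by simp
    qed
  qed
  ultimately show ?thesis using cM by simp
qed

lemma kl_even: "even (k + l)"
proof -
  have "card (pts k l) = k + l"
  proof -
    have "card (pts k l) = card (Inl ` {..<k} :: (nat + nat) set) + card (Inr ` {..<l} :: (nat + nat) set)"
      unfolding pts_def by (rule card_Un_disjoint) auto
    also have "\<dots> = k + l" by (simp add: card_image)
    finally show ?thesis .
  qed
  moreover have "card (pts k l) = (\<Sum>B\<in>p. card B)"
    unfolding pr_union[OF pr, symmetric]
  proof (rule card_Union_disjoint)
    show "pairwise disjnt p" using pr_disj[OF pr] unfolding pairwise_def disjnt_def by blast
    show "\<And>B. B \<in> p \<Longrightarrow> finite B" using pr_sub[OF pr] finite_pts finite_subset by blast
  qed
  moreover have "(\<Sum>B\<in>p. card B) = 2 * card p" using pr_card[OF pr] by simp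
  ultimately have "k + l = 2 * card p" by simp
  then show ?thesis by (metis dvd_triv_left)
qed

end

lemma po_facts:
  assumes P: "p \<in> Po_star k l"
  shows "is_pairing k l p"
    "\<forall>r r'. {Inl r, Inl r'} \<in> p \<longrightarrow> (even r \<longleftrightarrow> odd r')"
    "\<forall>s t. {Inr s, Inr t} \<in> p \<longrightarrow> (even s \<longleftrightarrow> odd t)"
    "\<forall>r s. {Inl r, Inr s} \<in> p \<longrightarrow> (even r \<longleftrightarrow> even s)"
proof -
  show pr: "is_pairing k l p" using P by (simp add: Po_star_def)
  have ev: "even (card {C \<in> p. crosses k l B C})" if "B \<in> p" for B
    using P that by (simp add: Po_star_def)
  have kl: "even (k + l)" by (rule kl_even[OF pr])
  show "\<forall>r r'. {Inl r, Inl r'} \<in> p \<longrightarrow> (even r \<longleftrightarrow> odd r')"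
  proof (intro allI impI)
    fix r r' assume B: "{Inl r, Inl r'} \<in> p"
    have B': "{Inl r', Inl r} \<in> p" using B by (simp add: insert_commute)
    have "r \<noteq> r'" using pr_neq[OF pr B] by simp
    then consider "r < r'" | "r' < r" by linarith
    then show "even r \<longleftrightarrow> odd r'"
    proof cases
      case 1
      then have "even (r' - r - 1)" using parity_block[OF pr B] ev[OF B] by simp
      then show ?thesis using 1 by presburger
    next
      case 2
      then have "even (r - r' - 1)" using parity_block[OF pr B'] ev[OF B'] by (simp add: insert_commute)
      then show ?thesis using 2 by presburger
    qed
  qed
  show "\<forall>s t. {Inr s, Inr t} \<in> p \<longrightarrow> (even s \<longleftrightarrow> odd t)"
  proof (intro allI impI)
    fix s t assume B: "{Inr s, Inr t} \<in> p"
    have B': "{Inr t, Inr s} \<in> p" using B by (simp add: insert_commute)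
    have st: "s < l" "t < l" using bds[OF pr] B B' by blast+
    have "s \<noteq> t" using pr_neq[OF pr B] by simp
    then consider "t < s" | "s < t" by linarith
    then show "even s \<longleftrightarrow> odd t"
    proof cases
      case 1
      then have "cpos k l (Inr s) < cpos k l (Inr t)" using st by simp
      then have "even (cpos k l (Inr t) - cpos k l (Inr s) - 1)" using parity_block[OF pr B] ev[OF B] by simp
      then have "even (s - t - 1)" using st 1 by simp
      then show ?thesis using 1 by presburger
    next
      case 2
      then have "cpos k l (Inr t) < cpos k l (Inr s)" using st by simp
      then have "even (cpos k l (Inr s) - cpos k l (Inr t) - 1)" using parity_block[OF pr B'] ev[OF B']
        by (simp add: insert_commute)
      then have "even (t - s - 1)" using st 2 by simp
      then show ?thesis using 2 by presburger
    qed
  qed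
  show "\<forall>r s. {Inl r, Inr s} \<in> p \<longrightarrow> (even r \<longleftrightarrow> even s)"
  proof (intro allI impI)
    fix r s assume B: "{Inl r, Inr s} \<in> p"
    have rs: "r < k" "s < l" using bds[OF pr] B by blast+
    then have "cpos k l (Inl r) < cpos k l (Inr s)" by simp
    then have "even (cpos k l (Inr s) - cpos k l (Inl r) - 1)" using parity_block[OF pr B] ev[OF B] by simp
    then have "even (k + (l - 1 - s) - r - 1)" by simp
    then show "even r \<longleftrightarrow> even s" using rs kl by presburger
  qed
qed


definition sw :: "nat + nat \<Rightarrow> nat + nat" where "sw = case_sum Inr Inl"
definition flipp :: "(nat + nat) set set \<Rightarrow> (nat + nat) set set" where
  "flipp p = (\<lambda>B. sw ` B) ` p"

lemma sw_sw[simp]: "sw (sw x) = x" unfolding sw_def by (cases x) auto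
lemma sw_simps[simp]: "sw (Inl r) = Inr r" "sw (Inr s) = Inl s" unfolding sw_def by auto
lemma sw_inj: "inj sw" by (metis injI sw_sw)
lemma sw_img_img[simp]: "sw ` sw ` B = B" by (simp add: image_comp comp_def)

lemma flipp_mem: "B \<in> flipp p \<longleftrightarrow> sw ` B \<in> p"
  unfolding flipp_def
proof
  assume "B \<in> (\<lambda>B. sw ` B) ` p"
  then obtain C where "C \<in> p" "B = sw ` C" by blast
  then show "sw ` B \<in> p" by simp
next
  assume "sw ` B \<in> p"
  then show "B \<in> (\<lambda>B. sw ` B) ` p" by (rule rev_image_eqI) simp
qed

lemma swap_mem: "(a, b) \<in> prod.swap ` S \<longleftrightarrow> (b, a) \<in> S"
proof
  assume "(a, b) \<in> prod.swap ` S"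
  then obtain x where "x \<in> S" "(a, b) = prod.swap x" by (rule imageE)
  then show "(b, a) \<in> S" by (cases x) simp
next
  assume "(b, a) \<in> S"
  then show "(a, b) \<in> prod.swap ` S" by (rule rev_image_eqI) simp
qed

lemma flipp_pair: "{x, y} \<in> flipp p \<longleftrightarrow> {sw x, sw y} \<in> p"
  by (simp add: flipp_mem)

lemma pts_flip: "sw ` pts k l = pts l k"
  unfolding pts_def image_Un image_image by (simp add: Un_commute)

lemma flipp_pairing: "is_pairing k l p \<Longrightarrow> is_pairing l k (flipp p)"
proof -
  assume pr: "is_pairing k l p"
  have "\<Union>(flipp p) = sw ` \<Union>p" unfolding flipp_def by (simp add: image_Union)
  then have U: "\<Union>(flipp p) = pts l k" using pr_union[OF pr] pts_flip by simp
  have C: "\<forall>B\<in>flipp p. card B = 2"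
  proof
    fix B assume "B \<in> flipp p"
    then have "sw ` B \<in> p" by (simp add: flipp_mem)
    then have "card (sw ` B) = 2" by (rule pr_card[OF pr])
    then show "card B = 2" using card_image[OF inj_on_subset[OF sw_inj]] by simp
  qed
  have D: "\<forall>B\<in>flipp p. \<forall>C\<in>flipp p. B \<noteq> C \<longrightarrow> B \<inter> C = {}"
  proof (intro ballI impI)
    fix B C assume "B \<in> flipp p" "C \<in> flipp p" "B \<noteq> C"
    then have "sw ` B \<in> p" "sw ` C \<in> p" "sw ` B \<noteq> sw ` C"
      by (auto simp: flipp_mem inj_image_eq_iff[OF sw_inj])
    then have "sw ` B \<inter> sw ` C = {}" by (rule pr_disj[OF pr])
    then show "B \<inter> C = {}" by (metis image_Int image_empty sw_img_img sw_inj)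
  qed
  show ?thesis unfolding is_pairing_def by (intro conjI U C D)
qed

lemma delta_flipp: "delta (flipp p) j' i' \<longleftrightarrow> delta p i' j'"
proof -
  have cs: "case_sum j' i' (sw x) = case_sum i' j' x" for x by (cases x) auto
  have bi: "(\<forall>x\<in>f ` A. Q x) \<longleftrightarrow> (\<forall>x\<in>A. Q (f x))" for f :: "'x \<Rightarrow> 'y" and A Q by blast
  have "delta (flipp p) j' i' \<longleftrightarrow> (\<forall>B\<in>p. \<forall>x\<in>sw ` B. \<forall>y\<in>sw ` B. case_sum j' i' x = case_sum j' i' y)"
    unfolding delta_def flipp_def bi ..
  also have "\<dots> \<longleftrightarrow> delta p i' j'" unfolding delta_def bi cs ..
  finally show ?thesis .
qed

theorem main_dir:
  fixes u :: "nat \<Rightarrow> nat \<Rightarrow> 'a::ring_1" and n :: nat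
  assumes HC: "\<forall>a\<in>G. \<forall>b\<in>G. \<forall>c\<in>G. a * b * c = c * b * a"
    and G: "G = {u i j |i j. i < n \<and> j < n}"
    and col: "\<forall>a<n. \<forall>b<n. (\<Sum>m<n. u m a * u m b) = (if a = b then 1 else 0)"
    and row: "\<forall>a<n. \<forall>b<n. (\<Sum>m<n. u a m * u b m) = (if a = b then 1 else 0)"
    and P: "p \<in> Po_star k l"
  shows "intertwines n u k l p"
  unfolding intertwines_def
proof (intro ballI)
  fix j i' assume j: "j \<in> multi_idx l n" and i': "i' \<in> multi_idx k n"
  note F = po_facts[OF P]
  define v where "v a b = u b a" for a b
  define q where "q = flipp p"
  have prq: "is_pairing l k q" unfolding q_def by (rule flipp_pairing[OF F(1)])
  have parq: "\<forall>r r'. {Inl r, Inl r'} \<in> q \<longrightarrow> even r = odd r'"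
    using F(3) unfolding q_def by (simp add: flipp_pair)
  have Gv: "G = {v i j |i j. i < n \<and> j < n}" unfolding G v_def by blast
  have orthv: "\<forall>a<n. \<forall>b<n. (\<Sum>m<n. v m a * v m b) = (if a = b then 1 else 0)"
    using row unfolding v_def by simp
  obtain T1 where T1: "set T1 \<subseteq> G"
    "evs T1 = image_mset (\<lambda>(r, s). u (j s) (i' r)) (mset_set (ThE p))"
    "ods T1 = image_mset (\<lambda>(r, s). u (j s) (i' r)) (mset_set (ThO p))"
    "(\<Sum>i\<in>multi_idx k n. if delta p i j then prod_list (map (\<lambda>r. u (i r) (i' r)) [0..<k]) else 0)
    = (if (\<forall>s t. {Inr s, Inr t} \<in> p \<longrightarrow> j s = j t) \<and> (\<forall>r r'. {Inl r, Inl r'} \<in> p \<longrightarrow> i' r = i' r')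
       then prod_list T1 else 0)"
    using SL[OF F(1) F(2) HC G col j i'] by blast
  obtain T2 where T2: "set T2 \<subseteq> G"
    "evs T2 = image_mset (\<lambda>(r, s). v (i' s) (j r)) (mset_set (ThE q))"
    "ods T2 = image_mset (\<lambda>(r, s). v (i' s) (j r)) (mset_set (ThO q))"
    "(\<Sum>i\<in>multi_idx l n. if delta q i i' then prod_list (map (\<lambda>r. v (i r) (j r)) [0..<l]) else 0)
    = (if (\<forall>s t. {Inr s, Inr t} \<in> q \<longrightarrow> i' s = i' t) \<and> (\<forall>r r'. {Inl r, Inl r'} \<in> q \<longrightarrow> j r = j r')
       then prod_list T2 else 0)"
    using SL[OF prq parq HC Gv orthv i' j] by blast
  have sws: "ThE q = prod.swap ` ThE p" "ThO q = prod.swap ` ThO p"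
  proof -
    have "x \<in> ThE q \<longleftrightarrow> x \<in> prod.swap ` ThE p" for x
    proof (cases x)
      case (Pair a b)
      have "{Inl a, Inr b} \<in> q \<longleftrightarrow> {Inl b, Inr a} \<in> p"
        unfolding q_def flipp_pair by (simp add: insert_commute)
      then show ?thesis unfolding Pair swap_mem ThE_def[OF prq] ThE_def[OF F(1)] using F(4) by auto
    qed
    then show "ThE q = prod.swap ` ThE p" by blast
    have "x \<in> ThO q \<longleftrightarrow> x \<in> prod.swap ` ThO p" for x
    proof (cases x)
      case (Pair a b)
      have "{Inl a, Inr b} \<in> q \<longleftrightarrow> {Inl b, Inr a} \<in> p"
        unfolding q_def flipp_pair by (simp add: insert_commute)
      then show ?thesis unfolding Pair swap_mem ThO_def[OF prq] ThO_def[OF F(1)] using F(4) by auto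
    qed
    then show "ThO q = prod.swap ` ThO p" by blast
  qed
  have fin: "finite (ThE p)" "finite (ThO p)" using fin_sets[OF F(1)] by auto
  have injs: "inj_on prod.swap A" for A :: "(nat \<times> nat) set" by (rule inj_onI) auto
  have ms: "mset_set (prod.swap ` A) = image_mset prod.swap (mset_set A)" for A :: "(nat \<times> nat) set"
    using image_mset_mset_set[OF injs[of A]] by simp
  have e: "evs T1 = evs T2" "ods T1 = ods T2"
    unfolding T1(2,3) T2(2,3) sws ms multiset.map_comp
    by (simp_all add: comp_def v_def case_prod_unfold)
  have pe: "prod_list T1 = prod_list T2" by (rule word_lemma[OF HC T1(1) T2(1) e])
  have rhs: "(\<Sum>j'\<in>multi_idx l n. if delta p i' j' then prod_list (map (\<lambda>s. u (j s) (j' s)) [0..<l]) else 0)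
     = (\<Sum>i\<in>multi_idx l n. if delta q i i' then prod_list (map (\<lambda>r. v (i r) (j r)) [0..<l]) else 0)"
    unfolding q_def delta_flipp v_def ..
  have c1: "(\<forall>s t. {Inr s, Inr t} \<in> q \<longrightarrow> i' s = i' t) \<longleftrightarrow> (\<forall>r r'. {Inl r, Inl r'} \<in> p \<longrightarrow> i' r = i' r')"
    "(\<forall>r r'. {Inl r, Inl r'} \<in> q \<longrightarrow> j r = j r') \<longleftrightarrow> (\<forall>s t. {Inr s, Inr t} \<in> p \<longrightarrow> j s = j t)"
    unfolding q_def by (simp_all add: flipp_pair)
  show "(\<Sum>i\<in>multi_idx k n. if delta p i j then prod_list (map (\<lambda>r. u (i r) (i' r)) [0..<k]) else 0)
      = (\<Sum>j'\<in>multi_idx l n. if delta p i' j' then prod_list (map (\<lambda>s. u (j s) (j' s)) [0..<l]) else 0)"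
    unfolding rhs T1(4) T2(4) c1 pe by auto
qed


lemma lt3: "{..<3::nat} = {0, 1, 2}" by (auto simp: numeral_3_eq_3 less_Suc_eq)
lemma upt3: "[0..<3] = [0, 1, 2::nat]" by (simp add: upt_rec)

lemma sum_single3:
  assumes x0: "x0 \<in> multi_idx 3 n"
    and P: "\<And>x. x \<in> multi_idx 3 n \<Longrightarrow> P x \<longleftrightarrow> (x 0 = x0 0 \<and> x 1 = x0 1 \<and> x 2 = x0 2)"
  shows "(\<Sum>x\<in>multi_idx 3 n. if P x then f x else 0) = (f x0 :: 'a::comm_monoid_add)"
proof -
  have "P x \<longleftrightarrow> x = x0" if x: "x \<in> multi_idx 3 n" for x
  proof
    assume "P x"
    then have e: "x 0 = x0 0" "x 1 = x0 1" "x 2 = x0 2" using P[OF x] by auto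
    show "x = x0"
    proof
      fix r show "x r = x0 r"
      proof (cases "r < 3")
        case True then have "r = 0 \<or> r = 1 \<or> r = 2" by auto
        then show ?thesis using e by auto
      next
        case False then show ?thesis using x x0 by (auto simp: PiE_iff extensional_def)
      qed
    qed
  next
    assume "x = x0" then show "P x" using P[OF x] by simp
  qed
  then have "(\<Sum>x\<in>multi_idx 3 n. if P x then f x else 0) = (\<Sum>x\<in>multi_idx 3 n. if x = x0 then f x else 0)"
    by (intro sum.cong) auto
  also have "\<dots> = f x0" using x0 by (simp add: sum.delta finite_PiE)
  finally show ?thesis .
qed

definition p0 :: "(nat + nat) set set" where
  "p0 = {{Inl 0, Inr 2}, {Inl 1, Inr 1}, {Inl 2, Inr 0}}"

lemma p0_pairing: "is_pairing 3 3 p0"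
proof -
  have "pts 3 3 = {Inl 0, Inl 1, Inl 2, Inr 0, Inr 1, Inr 2}" unfolding pts_def lt3 by auto
  then show ?thesis unfolding is_pairing_def p0_def by auto
qed

lemma p0_Po: "p0 \<in> Po_star 3 3"
proof -
  have "even (card {C \<in> p0. crosses 3 3 B C})" if B: "B \<in> p0" for B
  proof -
    from B consider "B = {Inl 0, Inr 2}" | "B = {Inl 1, Inr 1}" | "B = {Inl 2, Inr 0}"
      unfolding p0_def by blast
    then show ?thesis
    proof cases
      case 1 then show ?thesis using parity_block[OF p0_pairing, of "Inl 0" "Inr 2"] B by simp
    next
      case 2 then show ?thesis using parity_block[OF p0_pairing, of "Inl 1" "Inr 1"] B by simp
    next
      case 3 then show ?thesis using parity_block[OF p0_pairing, of "Inl 2" "Inr 0"] B by simp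
    qed
  qed
  then show ?thesis unfolding Po_star_def using p0_pairing by blast
qed

lemma conv_dir:
  fixes u :: "nat \<Rightarrow> nat \<Rightarrow> 'a::ring_1"
  assumes I: "intertwines n u 3 3 p0"
    and idx: "ia < n" "ja < n" "ib < n" "jb < n" "ic < n" "jc < n"
  shows "u ia ja * u ib jb * u ic jc = u ic jc * u ib jb * u ia ja"
proof -
  define j where "j = restrict (\<lambda>s. [ic, ib, ia] ! s) {..<3}"
  define i' where "i' = restrict (\<lambda>s. [ja, jb, jc] ! s) {..<3}"
  define i0 where "i0 = restrict (\<lambda>s. [ia, ib, ic] ! s) {..<3}"
  define j0 where "j0 = restrict (\<lambda>s. [jc, jb, ja] ! s) {..<3}"
  have jv: "j 0 = ic" "j 1 = ib" "j 2 = ia" unfolding j_def by (simp_all add: lt3)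
  have iv: "i' 0 = ja" "i' 1 = jb" "i' 2 = jc" unfolding i'_def by (simp_all add: lt3)
  have i0v: "i0 0 = ia" "i0 1 = ib" "i0 2 = ic" unfolding i0_def by (simp_all add: lt3)
  have j0v: "j0 0 = jc" "j0 1 = jb" "j0 2 = ja" unfolding j0_def by (simp_all add: lt3)
  have mem: "j \<in> multi_idx 3 n" "i' \<in> multi_idx 3 n" "i0 \<in> multi_idx 3 n" "j0 \<in> multi_idx 3 n"
    unfolding j_def i'_def i0_def j0_def using idx by (auto simp: lt3)
  have d1: "delta p0 i j \<longleftrightarrow> (i 0 = i0 0 \<and> i 1 = i0 1 \<and> i 2 = i0 2)" for i
    unfolding delta_def p0_def using jv i0v by auto
  have d2: "delta p0 i' j' \<longleftrightarrow> (j' 0 = j0 0 \<and> j' 1 = j0 1 \<and> j' 2 = j0 2)" for j'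
    unfolding delta_def p0_def using iv j0v by auto
  have "(\<Sum>i\<in>multi_idx 3 n. if delta p0 i j then prod_list (map (\<lambda>r. u (i r) (i' r)) [0..<3]) else 0)
      = (\<Sum>j'\<in>multi_idx 3 n. if delta p0 i' j' then prod_list (map (\<lambda>s. u (j s) (j' s)) [0..<3]) else 0)"
    using I mem(1,2) unfolding intertwines_def by blast
  moreover have "(\<Sum>i\<in>multi_idx 3 n. if delta p0 i j then prod_list (map (\<lambda>r. u (i r) (i' r)) [0..<3]) else 0)
      = prod_list (map (\<lambda>r. u (i0 r) (i' r)) [0..<3])"
    by (rule sum_single3[OF mem(3) d1])
  moreover have "(\<Sum>j'\<in>multi_idx 3 n. if delta p0 i' j' then prod_list (map (\<lambda>s. u (j s) (j' s)) [0..<3]) else 0)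
      = prod_list (map (\<lambda>s. u (j s) (j0 s)) [0..<3])"
    by (rule sum_single3[OF mem(4) d2])
  moreover have "j (Suc 0) = ib" "i' (Suc 0) = jb" "i0 (Suc 0) = ib" "j0 (Suc 0) = jb"
    using jv iv i0v j0v by simp_all
  ultimately show ?thesis by (simp add: upt3 jv iv i0v j0v mult.assoc)
qed

theorem theorem6p9:
  fixes n :: nat and u :: "nat \<Rightarrow> nat \<Rightarrow> 'a::cstar_algebra"
  assumes "orth_selfadj n u"
  shows "(\<forall>k l p. p \<in> Po_star k l \<longrightarrow> intertwines n u k l p) \<longleftrightarrow>
         (\<forall>a\<in>{u i j |i j. i < n \<and> j < n}. \<forall>b\<in>{u i j |i j. i < n \<and> j < n}.
            \<forall>c\<in>{u i j |i j. i < n \<and> j < n}. a * b * c = c * b * a)"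
proof
  assume I: "\<forall>k l p. p \<in> Po_star k l \<longrightarrow> intertwines n u k l p"
  then have I0: "intertwines n u 3 3 p0" using p0_Po by blast
  show "\<forall>a\<in>{u i j |i j. i < n \<and> j < n}. \<forall>b\<in>{u i j |i j. i < n \<and> j < n}.
            \<forall>c\<in>{u i j |i j. i < n \<and> j < n}. a * b * c = c * b * a"
  proof (intro ballI)
    fix a b c assume "a \<in> {u i j |i j. i < n \<and> j < n}" "b \<in> {u i j |i j. i < n \<and> j < n}"
      "c \<in> {u i j |i j. i < n \<and> j < n}"
    then obtain ia ja ib jb ic jc where "a = u ia ja" "b = u ib jb" "c = u ic jc"
      "ia < n" "ja < n" "ib < n" "jb < n" "ic < n" "jc < n" by blast
    then show "a * b * c = c * b * a" using conv_dir[OF I0] by simp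
  qed
next
  assume HC: "\<forall>a\<in>{u i j |i j. i < n \<and> j < n}. \<forall>b\<in>{u i j |i j. i < n \<and> j < n}.
            \<forall>c\<in>{u i j |i j. i < n \<and> j < n}. a * b * c = c * b * a"
  have row: "\<forall>a<n. \<forall>b<n. (\<Sum>m<n. u a m * u b m) = (if a = b then 1 else 0)"
    and col: "\<forall>a<n. \<forall>b<n. (\<Sum>m<n. u m a * u m b) = (if a = b then 1 else 0)"
    using assms unfolding orth_selfadj_def by auto
  show "\<forall>k l p. p \<in> Po_star k l \<longrightarrow> intertwines n u k l p"
    using main_dir[OF HC refl col row] by blast
qed


end
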